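(* Let $\varepsilon>0$ and let $f(t)=\sum_{n=0}^\infty a_nt^n$ for $-\varepsilon<t<\varepsilon$ be analytic, with $\{a_n\}\subset\mathbb{R}$. Let $\rho_N(x)=|x+e_N|_N^2-1$ for $x\in\mathbb{R}^N$, where $e_N=(0,\ldots,0,1)$ (so $f\circ\rho_N$ is defined and smooth on a neighbourhood of $0$). (i) If $N=1$ and $k\in\mathbb{Z}_+$, then $$[f(\rho_1)]^{(k)}(0)=k!\sum_{n=\lceil k/2\rceil}^k2^{2n-k}a_n\binom{n}{k-n}.$$ (ii) If $N\in\mathbb{N}\setminus\{1\}$ and $k\in\mathbb{Z}_+$, then $$|\nabla_N^k[f(\rho_N)](0)|_{N^k}^2=k!\sum_{l=0}^{\lfloor k/2\rfloor}\frac{(k-2l)!}{(2l)!}\Bigl(\sum_{n=\lceil k/2\rceil}^{k-l}2^{2n-k}a_n\binom{n}{k-n}\binom{k-n}{l}\Bigr)^2\gamma_{N-1}^{2l,2l}.$$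
   Context: For $M\in\mathbb{N}$: $|x|_M$ is the Euclidean norm on $\mathbb{R}^M$, $I_M=\{1,\ldots,M\}$, $D_i=\partial_{x_{i_1}}\cdots\partial_{x_{i_k}}$ for $i\in I_M^k$, $|\nabla_M^k u(x)|_{M^k}^2=\sum_{i\in I_M^k}(D_iu(x))^2$ (for $k=0$ this is $u(x)^2$). For $k\in\mathbb{Z}_+$, $s\in\mathbb{R}$, $\gamma_M^{s,k}$ denotes the constant value of $(|x|_M^{k-s}|\nabla_M^k[|x|_M^s]|_{M^k})^2$ on $\mathbb{R}^M\setminus\{0\}$ (it is known to be constant). $\binom{n}{j}=(n)_j/j!$ with $(n)_j=\prod_{i=0}^{j-1}(n-i)$, $(n)_0=1$. *)

theory Defs
  imports "HOL-Analysis.Analysis"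
begin

text \<open>Points of R^M are modelled as functions nat => real; only the coordinates
  0..M-1 are used (coordinate j of the paper is index j-1 here).\<close>

definition pdiff :: "nat \<Rightarrow> ((nat \<Rightarrow> real) \<Rightarrow> real) \<Rightarrow> (nat \<Rightarrow> real) \<Rightarrow> real" where
  "pdiff i u x = deriv (\<lambda>t. u (x(i := x i + t))) 0"

fun Dlist :: "nat list \<Rightarrow> ((nat \<Rightarrow> real) \<Rightarrow> real) \<Rightarrow> (nat \<Rightarrow> real) \<Rightarrow> real" where
  "Dlist [] u = u"
| "Dlist (i # is) u = pdiff i (Dlist is u)"

definition gradnorm2 :: "nat \<Rightarrow> nat \<Rightarrow> ((nat \<Rightarrow> real) \<Rightarrow> real) \<Rightarrow> (nat \<Rightarrow> real) \<Rightarrow> real" where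
  "gradnorm2 M k u x = (\<Sum>is\<in>{is. length is = k \<and> set is \<subseteq> {..<M}}. (Dlist is u x)\<^sup>2)"

definition enorm :: "nat \<Rightarrow> (nat \<Rightarrow> real) \<Rightarrow> real" where
  "enorm M x = sqrt (\<Sum>j<M. (x j)\<^sup>2)"

definition gamma :: "nat \<Rightarrow> real \<Rightarrow> nat \<Rightarrow> real" where
  "gamma M s k = (THE c. \<forall>x. (\<forall>j\<ge>M. x j = 0) \<and> (\<exists>j<M. x j \<noteq> 0) \<longrightarrow>
      (enorm M x powr (real k - s))\<^sup>2 * gradnorm2 M k (\<lambda>y. enorm M y powr s) x = c)"

definition rho :: "nat \<Rightarrow> (nat \<Rightarrow> real) \<Rightarrow> real" where
  "rho N x = (\<Sum>j<N. (x j + (if j = N - 1 then 1 else 0))\<^sup>2) - 1"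

end

theory Submission
  imports Defs "HOL-Computational_Algebra.Polynomial"
begin


fun C1 :: "nat \<Rightarrow> real \<Rightarrow> real poly" where
  "C1 0 y = 1"
| "C1 (Suc 0) y = [:0, 2*y:]"
| "C1 (Suc (Suc n)) y = pCons 0 (smult (2*y) (C1 (Suc n) y) + smult (2 * real (Suc n)) (C1 n y))"

lemma C1_coeff0: "coeff (C1 (Suc n) y) 0 = 0"
  by (cases n) auto

lemma C1_rec: "coeff (C1 (Suc n) y) (Suc j) = 2*y*coeff (C1 n y) j + 2 * real n * coeff (C1 (n-1) y) j"
  by (cases n) (auto simp: coeff_pCons split: nat.splits)

lemma C1_coeff_0: "coeff (C1 n y) 0 = (if n = 0 then 1 else 0)"
  by (cases n) (auto simp: C1_coeff0)

lemma C1_deriv: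
  "((\<lambda>y. coeff (C1 n y) j) has_real_derivative
     (2 * real n * (if j = 0 then 0 else coeff (C1 (n-1) y) (j-1)))) (at y)"
proof (induction n arbitrary: j y rule: nat_less_induct)
  case (1 n)
  show ?case
  proof (cases n)
    case 0 then show ?thesis by (simp add: coeff_1 DERIV_const)
  next
    case (Suc m)
    show ?thesis
    proof (cases j)
      case 0 then show ?thesis using Suc by (simp add: C1_coeff0 DERIV_const)
    next
      case (Suc i)
      have e: "(\<lambda>y. coeff (C1 n y) j) = (\<lambda>y. 2*y*coeff (C1 m y) i + 2 * real m * coeff (C1 (m-1) y) i)"
        using \<open>n = Suc m\<close> Suc by (simp add: C1_rec)
      have d1: "((\<lambda>y. coeff (C1 m y) i) has_real_derivative
         (2 * real m * (if i = 0 then 0 else coeff (C1 (m-1) y) (i-1)))) (at y)"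
        using 1 \<open>n = Suc m\<close> by auto
      have d2: "((\<lambda>y. coeff (C1 (m-1) y) i) has_real_derivative
         (2 * real (m-1) * (if i = 0 then 0 else coeff (C1 (m-1-1) y) (i-1)))) (at y)"
        by (rule 1[rule_format]) (use \<open>n = Suc m\<close> in simp)
      define A where "A = 2 * real m * (if i = 0 then 0 else coeff (C1 (m-1) y) (i-1))"
      define B where "B = 2 * real (m-1) * (if i = 0 then 0 else coeff (C1 (m-1-1) y) (i-1))"
      have d1': "((\<lambda>y. coeff (C1 m y) i) has_real_derivative A) (at y)" using d1 unfolding A_def .
      have d2': "((\<lambda>y. coeff (C1 (m-1) y) i) has_real_derivative B) (at y)" using d2 unfolding B_def .
      have D: "((\<lambda>y. 2*y*coeff (C1 m y) i + 2 * real m * coeff (C1 (m-1) y) i) has_real_derivative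
         (2 * coeff (C1 m y) i + 2*y*A + 2 * real m * B)) (at y)"
        by (rule derivative_eq_intros d1' d2' refl | simp)+
      have key: "2 * coeff (C1 m y) i + 2*y*(2 * real m * (if i = 0 then 0 else coeff (C1 (m-1) y) (i-1)))
          + 2 * real m * (2 * real (m-1) * (if i = 0 then 0 else coeff (C1 (m-1-1) y) (i-1)))
          = 2 * real n * coeff (C1 (n-1) y) (j-1)"
      proof (cases m)
        case 0 then show ?thesis using \<open>n = Suc m\<close> Suc by simp
      next
        case (Suc p)
        show ?thesis
        proof (cases i)
          case 0 then show ?thesis using \<open>n = Suc m\<close> \<open>j = Suc i\<close> Suc by (simp add: C1_coeff0)
        next
          case (Suc q)
          have "coeff (C1 m y) i = 2*y*coeff (C1 p y) q + 2 * real p * coeff (C1 (p-1) y) q"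
            using \<open>m = Suc p\<close> Suc C1_rec by simp
          then show ?thesis using \<open>n = Suc m\<close> \<open>j = Suc i\<close> \<open>m = Suc p\<close> Suc
            by (simp add: algebra_simps)
        qed
      qed
      show ?thesis using D key e Suc unfolding A_def B_def by simp
    qed
  qed
qed



definition K :: "nat \<Rightarrow> nat \<Rightarrow> real \<Rightarrow> real" where
  "K n j y = (if n \<le> 2*j \<and> j \<le> n then fact n / (fact (2*j - n) * fact (n - j)) * 2^(2*j-n) * y^(2*j-n) else 0)"

lemma K_rec: "K (Suc m) (Suc i) y = 2*y*K m i y + 2*real m*K (m-1) i y"
proof -
  consider "m < i" | "i = m" | "2*i+1 < m" | "m = 2*i+1" | "m \<le> 2*i" "i < m" by linarith
  then show ?thesis
  proof cases
    case 1 then show ?thesis by (auto simp: K_def)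
  next
    case 2 then show ?thesis by (cases m) (auto simp: K_def)
  next
    case 3 then show ?thesis by (simp add: K_def)
  next
    case 4
    have "K (Suc m) (Suc i) y = fact (2*i+2) / fact (i+1)" using 4 by (simp add: K_def)
    moreover have "K m i y = 0" using 4 by (simp add: K_def)
    moreover have "K (m-1) i y = fact (2*i) / fact i" using 4 by (simp add: K_def)
    moreover have "fact (2*i+2) / fact (i+1) = 2 * real (2*i+1) * (fact (2*i) / fact i :: real)"
      by (simp add: fact_Suc field_simps del: of_nat_Suc) (simp add: algebra_simps)
    ultimately show ?thesis using 4 by simp
  next
    case 5
    define d where "d = 2*i - m"
    define e where "e = m - i - 1"
    have e: "m - i = Suc e" using 5 e_def by simp
    have hi: "i = d + Suc e" and hm: "m = d + 2 * Suc e" using 5 e d_def by auto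
    define F :: real where "F = fact (d + 2*e + 1)"
    define G :: real where "G = fact d"
    define H :: real where "H = fact e"
    have F0: "F > 0" "G > 0" "H > 0" by (auto simp: F_def G_def H_def)
    have nz: "G * H + G * (H * real d) > 0" "G * H + G * (H * real e) > 0"
      "G * H + (G * (H * real d) + (G * (H * real e) + G * (H * (real d * real e)))) > 0"
      using F0 by (intro add_pos_nonneg mult_pos_pos mult_nonneg_nonneg; simp)+
    have f1: "fact (d + 2 * Suc e) = real (d+2*e+2) * F" by (simp add: F_def)
    have f2: "fact (Suc (d + 2 * Suc e)) = real (d+2*e+3) * real (d+2*e+2) * F"
      by (simp add: F_def algebra_simps)
    have f3: "fact (Suc d) = real (d+1) * G" by (simp add: G_def)
    have f4: "fact (Suc e) = real (e+1) * H" by (simp add: H_def)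
    have f5: "fact (d + 2 * Suc e - 1) = F" by (simp add: F_def)
    have L: "K (Suc m) (Suc i) y = fact (Suc (d + 2 * Suc e)) / (fact (Suc d) * fact (Suc e)) * 2^(Suc d) * y^(Suc d)"
      unfolding K_def hi hm by (simp add: algebra_simps)
    have R1: "K m i y = fact (d + 2 * Suc e) / (fact d * fact (Suc e)) * 2^d * y^d"
      unfolding K_def hi hm by (simp add: algebra_simps)
    have R2: "K (m-1) i y = fact (d + 2 * Suc e - 1) / (fact (Suc d) * fact e) * 2^(Suc d) * y^(Suc d)"
      unfolding K_def hi hm by (simp add: algebra_simps)
    define X where "X = 2^(Suc d) * y^(Suc d) * real (d+2*e+2) * F / (G * H)"
    have dpos: "real d + 1 > 0" "real e + 1 > 0" by auto
    have a1: "K (Suc m) (Suc i) y = X * ((real d + 2*real e + 3) / ((real d+1)*(real e+1)))"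
      unfolding L f2 f3 f4 X_def using F0 dpos by (simp add: field_simps)
    have a2: "2*y*K m i y = X * (1 / (real e + 1))"
      unfolding R1 f1 f4 X_def using F0 dpos by (simp add: field_simps G_def[symmetric])
    have a3: "2*real m*K (m-1) i y = X * (2 / (real d + 1))"
      unfolding R2 f5 f3 X_def using F0 dpos hm by (simp add: field_simps H_def[symmetric])
    have a4: "(real d + 2*real e + 3) / ((real d+1)*(real e+1)) = 1 / (real e + 1) + 2 / (real d + 1)"
      using dpos by (simp add: field_simps)
    show ?thesis unfolding a1 a2 a3 a4 by (simp add: algebra_simps)
  qed
qed

lemma C1_closed: "coeff (C1 n y) j = K n j y"
proof (induction n arbitrary: j rule: nat_less_induct)
  case (1 n)
  show ?case
  proof (cases n)
    case 0 then show ?thesis by (cases j) (auto simp: K_def)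
  next
    case (Suc m)
    show ?thesis
    proof (cases j)
      case 0 then show ?thesis using Suc by (simp add: C1_coeff0 K_def)
    next
      case (Suc i)
      then show ?thesis using \<open>n = Suc m\<close> 1 by (simp add: C1_rec K_rec)
    qed
  qed
qed



definition Cp :: "nat list \<Rightarrow> (nat \<Rightarrow> real) \<Rightarrow> real poly" where
  "Cp is y = (\<Prod>m\<in>set is. C1 (count_list is m) (y m))"

lemma C1_degree: "degree (C1 n y) \<le> n"
  by (rule degree_le) (auto simp: C1_closed K_def)

lemma Cp_degree: "degree (Cp is y) \<le> length is"
proof -
  have "degree (Cp is y) \<le> sum (degree \<circ> (\<lambda>m. C1 (count_list is m) (y m))) (set is)"
    unfolding Cp_def by (rule degree_prod_sum_le) simp
  also have "\<dots> \<le> sum (count_list is) (set is)"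
    by (rule sum_mono) (simp add: C1_degree)
  also have "\<dots> = length is" by (rule sum_count_set) auto
  finally show ?thesis .
qed

lemma Cp_coeff_high: "length is < j \<Longrightarrow> coeff (Cp is y) j = 0"
  using Cp_degree[of "is" y] by (simp add: coeff_eq_0)

lemma coeff_pCons0: "coeff (pCons 0 p) j = (if j = 0 then 0 else coeff p (j-1))"
  by (simp add: coeff_pCons')

lemma C1_Suc_poly: "n \<ge> 1 \<Longrightarrow> C1 (Suc n) y = pCons 0 (smult (2*y) (C1 n y)) + smult (2 * real n) (pCons 0 (C1 (n-1) y))"
  apply (rule poly_eqI)
  subgoal for na by (cases na) (auto simp: coeff_pCons0 C1_coeff0 C1_rec)
  done

lemma C1_one: "C1 (Suc 0) y = pCons 0 (smult (2*y) 1)"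
  by simp

lemma Cp_deriv:
  "((\<lambda>t. coeff (Cp is (y(i := y i + t))) j) has_real_derivative
     (coeff (Cp (i#is) y) j - (if j = 0 then 0 else 2 * y i * coeff (Cp is y) (j-1)))) (at 0)"
proof (cases "i \<in> set is")
  case False
  have e1: "Cp is (y(i := y i + t)) = Cp is y" for t
    unfolding Cp_def using False by (intro prod.cong) auto
  have "Cp (i#is) y = C1 1 (y i) * Cp is y"
  proof -
    have "Cp (i#is) y = C1 (count_list (i#is) i) (y i) * (\<Prod>m\<in>set is. C1 (count_list (i#is) m) (y m))"
      unfolding Cp_def using False by (simp add: prod.insert)
    also have "(\<Prod>m\<in>set is. C1 (count_list (i#is) m) (y m)) = Cp is y"
      unfolding Cp_def using False by (intro prod.cong) auto
    finally show ?thesis using False by simp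
  qed
  then have "coeff (Cp (i#is) y) j = (if j = 0 then 0 else 2 * y i * coeff (Cp is y) (j-1))"
    by (simp add: coeff_pCons0 del: C1.simps(2) mult_pCons_left) (simp add: coeff_pCons0)
  then show ?thesis unfolding e1 by simp
next
  case True
  define n where "n = count_list is i"
  have n1: "n \<ge> 1" using True n_def count_list_0_iff[of "is" i] by auto
  define R where "R = (\<Prod>m\<in>set is - {i}. C1 (count_list is m) (y m))"
  have e1: "Cp is (y(i := y i + t)) = C1 n (y i + t) * R" for t
  proof -
    have "Cp is (y(i := y i + t)) = C1 n (y i + t) * (\<Prod>m\<in>set is - {i}. C1 (count_list is m) ((y(i := y i + t)) m))"
      unfolding Cp_def n_def using True by (simp add: prod.remove)
    also have "(\<Prod>m\<in>set is - {i}. C1 (count_list is m) ((y(i := y i + t)) m)) = R"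
      unfolding R_def by (intro prod.cong) auto
    finally show ?thesis .
  qed
  have e2: "Cp (i#is) y = C1 (Suc n) (y i) * R"
  proof -
    have "Cp (i#is) y = C1 (Suc n) (y i) * (\<Prod>m\<in>set is - {i}. C1 (count_list (i#is) m) (y m))"
      unfolding Cp_def n_def using True by (simp add: prod.remove insert_absorb)
    also have "(\<Prod>m\<in>set is - {i}. C1 (count_list (i#is) m) (y m)) = R"
      unfolding R_def by (intro prod.cong) auto
    finally show ?thesis .
  qed
  have e3: "Cp is y = C1 n (y i) * R" using e1[of 0] by simp
  define Q where "Q = smult (2 * real n) (pCons 0 (C1 (n-1) (y i)))"
  have dQ: "((\<lambda>t. coeff (C1 n (y i + t)) a) has_real_derivative coeff Q a) (at 0)" for a
  proof -
    define V where "V = 2 * real n * (if a = 0 then 0 else coeff (C1 (n-1) (y i)) (a-1))"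
    have h: "((\<lambda>y. coeff (C1 n y) a) has_real_derivative V) (at (0 + y i))"
      unfolding V_def using C1_deriv[of n a "y i"] by simp
    have "((\<lambda>t. coeff (C1 n (t + y i)) a) has_real_derivative V) (at 0)"
      using h DERIV_shift[of "\<lambda>y. coeff (C1 n y) a" V 0 "y i"] by simp
    moreover have "(\<lambda>t. coeff (C1 n (t + y i)) a) = (\<lambda>t. coeff (C1 n (y i + t)) a)"
      by (simp add: add.commute)
    moreover have "V = coeff Q a" unfolding V_def Q_def by (simp add: coeff_pCons0)
    ultimately show ?thesis by simp
  qed
  have D: "((\<lambda>t. coeff (C1 n (y i + t) * R) j) has_real_derivative coeff (Q * R) j) (at 0)"
    unfolding coeff_mult
    by (intro DERIV_sum DERIV_cmult_right dQ)
  have "C1 (Suc n) (y i) = pCons 0 (smult (2*y i) (C1 n (y i))) + Q"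
    unfolding Q_def using C1_Suc_poly[OF n1] .
  then have "coeff (Cp (i#is) y) j = coeff (pCons 0 (smult (2*y i) (C1 n (y i) * R))) j + coeff (Q * R) j"
    unfolding e2 by (simp add: distrib_right)
  then have "coeff (Q * R) j = coeff (Cp (i#is) y) j - (if j = 0 then 0 else 2 * y i * coeff (Cp is y) (j-1))"
    unfolding e3 by (simp add: coeff_pCons0)
  then show ?thesis using D unfolding e1 by simp
qed



definition rr :: "nat \<Rightarrow> (nat \<Rightarrow> real) \<Rightarrow> real \<Rightarrow> (nat \<Rightarrow> real) \<Rightarrow> real" where
  "rr N s d x = (\<Sum>j<N. (x j + s j)^2) + d"

lemma rr_upd: "i < N \<Longrightarrow> rr N s d (x(i := x i + t)) = rr N s d x + 2*t*(x i + s i) + t^2"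
proof -
  assume i: "i < N"
  have "(\<Sum>j<N. ((x(i := x i + t)) j + s j)^2) = ((x i + t) + s i)^2 + (\<Sum>j\<in>{..<N}-{i}. (x j + s j)^2)"
    using i by (simp add: sum.remove)
  moreover have "(\<Sum>j<N. (x j + s j)^2) = (x i + s i)^2 + (\<Sum>j\<in>{..<N}-{i}. (x j + s j)^2)"
    using i by (simp add: sum.remove)
  ultimately show ?thesis unfolding rr_def by (simp add: power2_eq_square algebra_simps)
qed

lemma wick:
  fixes F :: "nat \<Rightarrow> real \<Rightarrow> real" and f :: "real \<Rightarrow> real" and I :: "real set"
  assumes I: "open I" and F: "\<And>j t. t \<in> I \<Longrightarrow> (F j has_real_derivative F (Suc j) t) (at t)"
    and f: "\<And>t. t \<in> I \<Longrightarrow> f t = F 0 t"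
  shows "set is \<subseteq> {..<N} \<Longrightarrow> rr N s d x \<in> I \<Longrightarrow>
    Dlist is (\<lambda>x. f (rr N s d x)) x = (\<Sum>j\<le>length is. F j (rr N s d x) * coeff (Cp is (\<lambda>m. x m + s m)) j)"
proof (induction "is" arbitrary: x)
  case Nil
  then show ?case by (simp add: f Cp_def)
next
  case (Cons i "is")
  have iN: "i < N" and sN: "set is \<subseteq> {..<N}" using Cons.prems by auto
  define u where "u = (\<lambda>x. f (rr N s d x))"
  define y where "y = (\<lambda>m. x m + s m)"
  define L where "L = length is"
  define g where "g = (\<lambda>t::real. rr N s d x + 2*t*(x i + s i) + t^2)"
  define S where "S = g -` I"
  have g0: "g 0 = rr N s d x" unfolding g_def by simp
  have oS: "open S" unfolding S_def g_def
    by (rule continuous_open_vimage[OF I]) (intro continuous_intros)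
  have S0: "0 \<in> S" unfolding S_def using g0 Cons.prems by simp
  define G where "G = (\<lambda>t. \<Sum>j\<le>Suc L. F j (g t) * coeff (Cp is (y(i := y i + t))) j)"
  have yt: "(\<lambda>m. (x(i := x i + t)) m + s m) = y(i := y i + t)" for t
    unfolding y_def by auto
  have eqS: "Dlist is u (x(i := x i + t)) = G t" if "t \<in> S" for t
  proof -
    have "rr N s d (x(i := x i + t)) = g t" unfolding g_def by (rule rr_upd[OF iN])
    then have r: "rr N s d (x(i := x i + t)) \<in> I" using that S_def by simp
    have "Dlist is u (x(i := x i + t)) = (\<Sum>j\<le>L. F j (g t) * coeff (Cp is (y(i := y i + t))) j)"
      using Cons.IH[OF sN r] unfolding u_def L_def yt rr_upd[OF iN] g_def by (simp add: fun_upd_def)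
    also have "\<dots> = G t" unfolding G_def
      by (simp add: Cp_coeff_high L_def)
    finally show ?thesis .
  qed
  define a where "a = 2 * y i"
  have dg: "(g has_real_derivative a) (at 0)" unfolding g_def a_def y_def
    by (rule derivative_eq_intros refl | simp)+
  define c where "c = (\<lambda>j. coeff (Cp is y) j)"
  define cp where "cp = (\<lambda>j. coeff (Cp (i#is) y) j)"
  have dG: "(G has_real_derivative
     (\<Sum>j\<le>Suc L. F (Suc j) (g 0) * a * c j + F j (g 0) * (cp j - (if j = 0 then 0 else a * c (j-1))))) (at 0)"
    unfolding G_def
  proof (rule DERIV_sum)
    fix j assume "j \<in> {..Suc L}"
    have d1: "((\<lambda>t. F j (g t)) has_real_derivative F (Suc j) (g 0) * a) (at 0)"
      by (rule DERIV_chain2[OF F dg]) (use S0 S_def in simp)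
    have d2: "((\<lambda>t. coeff (Cp is (y(i := y i + t))) j) has_real_derivative (cp j - (if j = 0 then 0 else a * c (j-1)))) (at 0)"
      unfolding cp_def c_def a_def using Cp_deriv[of "is" y i j] by simp
    have "((\<lambda>t. F j (g t) * coeff (Cp is (y(i := y i + t))) j) has_real_derivative
       F (Suc j) (g 0) * a * coeff (Cp is (y(i := y i + 0))) j + F j (g 0) * (cp j - (if j = 0 then 0 else a * c (j-1)))) (at 0)"
      by (rule DERIV_mult[OF d1 d2, THEN DERIV_cong]) simp
    then show "((\<lambda>t. F j (g t) * coeff (Cp is (y(i := y i + t))) j) has_real_derivative
       F (Suc j) (g 0) * a * c j + F j (g 0) * (cp j - (if j = 0 then 0 else a * c (j-1)))) (at 0)"
      unfolding c_def by simp
  qed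
  have "Dlist (i#is) u x = deriv (\<lambda>t. Dlist is u (x(i := x i + t))) 0"
    by (simp add: pdiff_def)
  also have "\<dots> = (\<Sum>j\<le>Suc L. F (Suc j) (g 0) * a * c j + F j (g 0) * (cp j - (if j = 0 then 0 else a * c (j-1))))"
    apply (rule DERIV_imp_deriv)
    apply (rule has_field_derivative_transform_within_open[OF dG oS S0])
    using eqS by simp
  also have "\<dots> = (\<Sum>j\<le>Suc L. F j (g 0) * cp j)"
  proof -
    have cL: "c (Suc L) = 0" unfolding c_def L_def by (simp add: Cp_coeff_high)
    have s1: "(\<Sum>j\<le>Suc L. F (Suc j) (g 0) * a * c j) = (\<Sum>j\<le>Suc L. (if j = 0 then 0 else F j (g 0) * a * c (j-1)))"
    proof -
      have "(\<Sum>j\<le>Suc L. (if j = 0 then 0 else F j (g 0) * a * c (j-1))) = (\<Sum>j\<le>L. F (Suc j) (g 0) * a * c j)"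
        by (simp add: sum.atMost_Suc_shift del: sum.atMost_Suc)
      moreover have "(\<Sum>j\<le>Suc L. F (Suc j) (g 0) * a * c j) = (\<Sum>j\<le>L. F (Suc j) (g 0) * a * c j)"
        by (simp add: cL)
      ultimately show ?thesis by simp
    qed
    have "(\<Sum>j\<le>Suc L. F (Suc j) (g 0) * a * c j + F j (g 0) * (cp j - (if j = 0 then 0 else a * c (j-1))))
      = (\<Sum>j\<le>Suc L. F (Suc j) (g 0) * a * c j) + (\<Sum>j\<le>Suc L. F j (g 0) * (cp j - (if j = 0 then 0 else a * c (j-1))))"
      by (rule sum.distrib)
    also have "\<dots> = (\<Sum>j\<le>Suc L. (if j = 0 then 0 else F j (g 0) * a * c (j-1)) + F j (g 0) * (cp j - (if j = 0 then 0 else a * c (j-1))))"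
      unfolding s1 by (rule sum.distrib[symmetric])
    also have "\<dots> = (\<Sum>j\<le>Suc L. F j (g 0) * cp j)"
      by (rule sum.cong) (auto simp: algebra_simps)
    finally show ?thesis .
  qed
  finally show ?case unfolding u_def cp_def y_def L_def g0 by simp
qed



definition fd :: "(nat \<Rightarrow> real) \<Rightarrow> nat \<Rightarrow> real \<Rightarrow> real" where
  "fd a j t = (\<Sum>n. (diffs ^^ j) a n * t^n)"

lemma fd_summable:
  fixes a :: "nat \<Rightarrow> real" and t e :: real
  assumes "\<And>t. norm t < e \<Longrightarrow> summable (\<lambda>n. a n * t^n)"
  shows "norm t < e \<Longrightarrow> summable (\<lambda>n. (diffs ^^ j) a n * t^n)"
proof (induction j arbitrary: t)
  case 0 then show ?case using assms by simp
next
  case (Suc j)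
  show ?case using termdiff_converges[of t e "(diffs ^^ j) a"] Suc by simp
qed

lemma fd_deriv:
  fixes a :: "nat \<Rightarrow> real" and t e :: real
  assumes "\<And>t. norm t < e \<Longrightarrow> summable (\<lambda>n. a n * t^n)" and "norm t < e"
  shows "(fd a j has_real_derivative fd a (Suc j) t) (at t)"
  unfolding fd_def using termdiffs_strong'[of e "(diffs ^^ j) a" t] fd_summable[OF assms(1)] assms(2)
  by simp

lemma diffs_funpow: "(diffs ^^ j) a n = pochhammer (real (Suc n)) j * a (n + j)"
proof (induction j arbitrary: n)
  case 0 then show ?case by simp
next
  case (Suc j)
  show ?case using Suc by (simp add: diffs_def pochhammer_rec algebra_simps)
qed

lemma fd_zero: "fd a j 0 = fact j * a j"
proof -
  have "fd a j 0 = (diffs ^^ j) a 0" unfolding fd_def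
    using powser_zero[of "(diffs ^^ j) a"] by simp
  also have "\<dots> = fact j * a j" by (simp add: diffs_funpow pochhammer_fact)
  finally show ?thesis .
qed



lemma Vsum:
  assumes lk: "2*l \<le> k"
  shows "(\<Sum>j\<le>k. fact j * a j * (if l \<le> j then K (k-2*l) (j-l) 1 else 0)) =
    fact l * fact (k-2*l) * (\<Sum>n=(k+1) div 2..k-l. 2^(2*n-k) * a n * real (n choose (k-n)) * real ((k-n) choose l))"
proof -
  define T where "T = (\<lambda>j. fact j * a j * (if l \<le> j then K (k-2*l) (j-l) 1 else 0))"
  have sub: "{(k+1) div 2..k-l} \<subseteq> {..k}" by auto
  have z: "T j = 0" if "j \<in> {..k} - {(k+1) div 2..k-l}" for j
  proof -
    from that have "2*j < k \<or> k - l < j" by auto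
    then show ?thesis unfolding T_def K_def using lk by auto
  qed
  have "(\<Sum>j\<le>k. T j) = (\<Sum>j=(k+1) div 2..k-l. T j)"
    by (rule sum.mono_neutral_right) (use sub z in auto)
  also have "\<dots> = (\<Sum>n=(k+1) div 2..k-l. fact l * fact (k-2*l) * (2^(2*n-k) * a n * real (n choose (k-n)) * real ((k-n) choose l)))"
  proof (rule sum.cong[OF refl])
    fix j assume j: "j \<in> {(k+1) div 2..k-l}"
    then have j1: "k \<le> 2*j" and j2: "j \<le> k - l" and lj: "l \<le> j" using lk by auto
    have e1: "2*(j-l) - (k-2*l) = 2*j-k" and e2: "k - 2*l - (j-l) = k-l-j" using j1 j2 lj lk by auto
    have c1: "k - 2*l \<le> 2*(j-l) \<and> j - l \<le> k - 2*l" using j1 j2 lj lk by auto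
    have tT: "T j = fact j * a j * (fact (k-2*l) / (fact (2*j-k) * fact (k-l-j)) * 2^(2*j-k))"
      unfolding T_def K_def using lj c1 e1 e2 by simp
    moreover have b1: "real (j choose (k-j)) = fact j / (fact (k-j) * fact (2*j-k))"
    proof -
      have "j - (k - j) = 2*j - k" "k - j \<le> j" using j1 j2 by auto
      then show ?thesis using binomial_fact[of "k-j" j] by simp
    qed
    moreover have b2: "real ((k-j) choose l) = fact (k-j) / (fact l * fact (k-l-j))"
    proof -
      have "l \<le> k - j" using j2 lk by auto
      then show ?thesis using binomial_fact[of l "k-j"] by (simp add: algebra_simps)
    qed
    ultimately show "T j = fact l * fact (k-2*l) * (2^(2*j-k) * a j * real (j choose (k-j)) * real ((k-j) choose l))"
      unfolding tT b1 b2 by (simp add: field_simps)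
  qed
  also have "\<dots> = fact l * fact (k-2*l) * (\<Sum>n=(k+1) div 2..k-l. 2^(2*n-k) * a n * real (n choose (k-n)) * real ((k-n) choose l))"
    by (simp add: sum_distrib_left)
  finally show ?thesis unfolding T_def .
qed



lemma deriv_shift0: "deriv (\<lambda>t. \<phi> (c + t)) 0 = deriv \<phi> (c::real)"
proof -
  have "\<And>D. ((\<lambda>t. \<phi> (c + t)) has_real_derivative D) (at 0) = (\<phi> has_real_derivative D) (at c)"
    using DERIV_shift[of \<phi> _ 0 c] by (simp add: add.commute)
  then show ?thesis unfolding deriv_def by simp
qed

lemma Dlist_rep: "Dlist (replicate k 0) (\<lambda>v. h (v 0)) v = (deriv^^k) h (v 0)"
proof (induction k arbitrary: v)
  case 0 then show ?case by simp
next
  case (Suc k)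
  have "Dlist (replicate (Suc k) 0) (\<lambda>v. h (v 0)) v = deriv (\<lambda>t. Dlist (replicate k 0) (\<lambda>v. h (v 0)) (v(0 := v 0 + t))) 0"
    by (simp add: pdiff_def)
  also have "\<dots> = deriv (\<lambda>t. (deriv^^k) h (v 0 + t)) 0" using Suc by simp
  also have "\<dots> = (deriv^^Suc k) h (v 0)" by (simp add: deriv_shift0)
  finally show ?case .
qed

lemma count_rep: "count_list (replicate k x) x = k"
  by (induction k) auto

lemma Cp_rep: "Cp (replicate k 0) y = C1 k (y 0)"
proof (cases k)
  case 0 then show ?thesis by (simp add: Cp_def)
next
  case (Suc m)
  then have "set (replicate k (0::nat)) = {0}" by (simp add: set_replicate_conv_if)
  then show ?thesis unfolding Cp_def by (simp add: count_rep)
qed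

lemma part_i:
  fixes \<epsilon> :: real and a :: "nat \<Rightarrow> real" and f :: "real \<Rightarrow> real"
  assumes "\<epsilon> > 0"
    and sm: "\<forall>t. -\<epsilon> < t \<and> t < \<epsilon> \<longrightarrow> (\<lambda>n. a n * t ^ n) sums f t"
  shows "(deriv ^^ k) (\<lambda>x. f ((x + 1)\<^sup>2 - 1)) 0 =
            fact k * (\<Sum>n=(k+1) div 2..k. 2 ^ (2*n - k) * a n * real (n choose (k - n)))"
proof -
  define I where "I = {-\<epsilon><..<\<epsilon>}"
  have summ: "\<And>t. norm t < \<epsilon> \<Longrightarrow> summable (\<lambda>n. a n * t^n)"
  proof -
    fix t :: real assume "norm t < \<epsilon>"
    then have "(\<lambda>n. a n * t ^ n) sums f t" using sm by (auto simp: abs_less_iff)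
    then show "summable (\<lambda>n. a n * t^n)" by (rule sums_summable)
  qed
  have F: "\<And>j t. t \<in> I \<Longrightarrow> (fd a j has_real_derivative fd a (Suc j) t) (at t)"
    using fd_deriv[OF summ] unfolding I_def by (auto simp: abs_less_iff)
  have ff: "\<And>t. t \<in> I \<Longrightarrow> f t = fd a 0 t"
    unfolding I_def fd_def using sm sums_unique by auto
  define s :: "nat \<Rightarrow> real" where "s = (\<lambda>_. 1)"
  have eqf: "(\<lambda>v. (\<lambda>x. f ((x + 1)\<^sup>2 - 1)) (v 0)) = (\<lambda>v. f (rr 1 s (-1) v))"
    unfolding rr_def s_def by simp
  have r0: "rr 1 s (-1) (\<lambda>_. 0) = 0" unfolding rr_def s_def by simp
  have "(deriv ^^ k) (\<lambda>x. f ((x + 1)\<^sup>2 - 1)) 0 = Dlist (replicate k 0) (\<lambda>v. f (rr 1 s (-1) v)) (\<lambda>_. 0)"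
    using Dlist_rep[of k "\<lambda>x. f ((x + 1)\<^sup>2 - 1)" "\<lambda>_. 0"] unfolding eqf by simp
  also have "\<dots> = (\<Sum>j\<le>length (replicate k (0::nat)). fd a j (rr 1 s (-1) (\<lambda>_. 0)) * coeff (Cp (replicate k 0) (\<lambda>m. 0 + s m)) j)"
    by (rule wick[where I=I]) (use F ff r0 \<open>\<epsilon> > 0\<close> in \<open>auto simp: I_def\<close>)
  also have "\<dots> = (\<Sum>j\<le>k. fact j * a j * (if 0 \<le> j then K (k-2*0) (j-0) 1 else 0))"
    unfolding r0 Cp_rep by (simp add: fd_zero C1_closed s_def)
  also have "\<dots> = fact 0 * fact (k-2*0) * (\<Sum>n=(k+1) div 2..k-0. 2^(2*n-k) * a n * real (n choose (k-n)) * real ((k-n) choose 0))"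
    by (rule Vsum) simp
  finally show ?thesis by simp
qed



definition AA :: "nat \<Rightarrow> nat \<Rightarrow> nat list set" where
  "AA M k = {is. length is = k \<and> set is \<subseteq> {..<M}}"

lemma AA_0: "AA M 0 = {[]}" unfolding AA_def by auto

lemma AA_Suc: "AA M (Suc k) = (\<lambda>(i,is). i#is) ` ({..<M} \<times> AA M k)"
  unfolding AA_def by (auto simp: image_iff length_Suc_conv)

lemma AA_finite: "finite (AA M k)"
  by (induction k) (auto simp: AA_0 AA_Suc)

lemma AA_sum_Suc: "(\<Sum>is\<in>AA M (Suc k). g is) = (\<Sum>i<M. \<Sum>is\<in>AA M k. g (i#is))"
proof -
  have inj: "inj_on (\<lambda>(i,is). i#is) ({..<M} \<times> AA M k)" by (auto simp: inj_on_def)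
  have "(\<Sum>is\<in>AA M (Suc k). g is) = (\<Sum>p\<in>{..<M} \<times> AA M k. g ((\<lambda>(i,is). i#is) p))"
    unfolding AA_Suc by (rule sum.reindex[OF inj, unfolded comp_def])
  also have "\<dots> = (\<Sum>i<M. \<Sum>is\<in>AA M k. g (i#is))"
    by (simp add: sum.cartesian_product split_beta)
  finally show ?thesis .
qed

lemma split_sum:
  fixes \<phi> :: "nat list \<Rightarrow> real"
  shows "(\<Sum>is\<in>AA (Suc M) k. \<phi> (filter (\<lambda>m. m \<noteq> M) is)) = (\<Sum>m\<le>k. real (k choose m) * (\<Sum>is\<in>AA M m. \<phi> is))"
proof (induction k arbitrary: \<phi>)
  case 0 then show ?case by (simp add: AA_0)
next
  case (Suc k)
  define S where "S = (\<lambda>m (\<phi>::nat list \<Rightarrow> real). (\<Sum>is\<in>AA M m. \<phi> is))"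
  define \<phi>' where "\<phi>' = (\<lambda>is'. \<Sum>i<M. \<phi> (i#is'))"
  have SS: "S m \<phi>' = S (Suc m) \<phi>" for m
    unfolding S_def \<phi>'_def AA_sum_Suc by (rule sum.swap)
  have "(\<Sum>is\<in>AA (Suc M) (Suc k). \<phi> (filter (\<lambda>m. m \<noteq> M) is))
     = (\<Sum>i<Suc M. \<Sum>is\<in>AA (Suc M) k. \<phi> (filter (\<lambda>m. m \<noteq> M) (i#is)))"
    by (rule AA_sum_Suc)
  also have "\<dots> = (\<Sum>is\<in>AA (Suc M) k. \<phi> (filter (\<lambda>m. m \<noteq> M) is)) + (\<Sum>is\<in>AA (Suc M) k. \<phi>' (filter (\<lambda>m. m \<noteq> M) is))"
    unfolding \<phi>'_def by (simp add: sum.swap[of _ "{..<M}"])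
  also have "\<dots> = (\<Sum>m\<le>k. real (k choose m) * S m \<phi>) + (\<Sum>m\<le>k. real (k choose m) * S (Suc m) \<phi>)"
    using Suc[of \<phi>] Suc[of \<phi>'] SS unfolding S_def by simp
  also have "\<dots> = (\<Sum>m\<le>Suc k. real (Suc k choose m) * S m \<phi>)"
  proof -
    have "(\<Sum>m\<le>k. real (k choose m) * S m \<phi>) = (\<Sum>m\<le>Suc k. real (k choose m) * S m \<phi>)"
      by simp
    also have "\<dots> = S 0 \<phi> + (\<Sum>m\<le>k. real (k choose Suc m) * S (Suc m) \<phi>)"
      by (simp add: sum.atMost_Suc_shift del: sum.atMost_Suc)
    finally have "(\<Sum>m\<le>k. real (k choose m) * S m \<phi>) + (\<Sum>m\<le>k. real (k choose m) * S (Suc m) \<phi>)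
       = S 0 \<phi> + (\<Sum>m\<le>k. real (Suc k choose Suc m) * S (Suc m) \<phi>)"
      by (simp add: sum.distrib[symmetric] algebra_simps)
    also have "\<dots> = (\<Sum>m\<le>Suc k. real (Suc k choose m) * S m \<phi>)"
      by (simp add: sum.atMost_Suc_shift del: sum.atMost_Suc)
    finally show ?thesis .
  qed
  finally show ?case unfolding S_def .
qed



lemma count_filter: "count_list (filter P xs) x = (if P x then count_list xs x else 0)"
  by (induction xs) auto

lemma length_filter_count: "length (filter (\<lambda>m. m \<noteq> M) xs) + count_list xs M = length xs"
  by (induction xs) auto

lemma Cp_split:
  "Cp is (\<lambda>m. 0 + (if m = M then 1 else 0)) = C1 (count_list is M) 1 * Cp (filter (\<lambda>m. m \<noteq> M) is) (\<lambda>_. 0)"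
proof -
  define e :: "nat \<Rightarrow> real" where "e = (\<lambda>m. 0 + (if m = M then 1 else 0))"
  have sf: "set (filter (\<lambda>m. m \<noteq> M) is) = set is - {M}" by auto
  have r: "(\<Prod>m\<in>set is - {M}. C1 (count_list is m) (e m)) = Cp (filter (\<lambda>m. m \<noteq> M) is) (\<lambda>_. 0)"
    unfolding Cp_def sf e_def by (intro prod.cong) (auto simp: count_filter)
  show ?thesis
  proof (cases "M \<in> set is")
    case True
    have "Cp is e = C1 (count_list is M) (e M) * (\<Prod>m\<in>set is - {M}. C1 (count_list is m) (e m))"
      unfolding Cp_def using True by (simp add: prod.remove)
    then show ?thesis using r unfolding e_def by simp
  next
    case False
    then have "set is - {M} = set is" by auto
    then have "Cp is e = (\<Prod>m\<in>set is - {M}. C1 (count_list is m) (e m))" unfolding Cp_def by simp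
    then show ?thesis using r False unfolding e_def by simp
  qed
qed

definition cv :: "nat \<Rightarrow> real" where
  "cv n = (if even n then fact n / fact (n div 2) else 0)"

lemma C1_zero: "C1 n 0 = monom (cv n) (n div 2)"
proof (rule poly_eqI)
  fix j
  show "coeff (C1 n 0) j = coeff (monom (cv n) (n div 2)) j"
    unfolding C1_closed K_def cv_def coeff_monom by (cases "n = 0") auto
qed

definition wv :: "nat list \<Rightarrow> real" where
  "wv is = (\<Prod>m\<in>set is. cv (count_list is m))"

lemma prod_monom: "finite S \<Longrightarrow> (\<Prod>m\<in>S. monom (c m) (d m)) = monom (\<Prod>m\<in>S. c m) (\<Sum>m\<in>S. d m)"
  by (induction S rule: finite_induct) (auto simp: mult_monom)

lemma Cp_zero: "Cp is (\<lambda>_. 0) = monom (wv is) (length is div 2)"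
proof -
  have "Cp is (\<lambda>_. 0) = monom (wv is) (\<Sum>m\<in>set is. count_list is m div 2)"
    unfolding Cp_def wv_def C1_zero by (simp add: prod_monom)
  also have "\<dots> = monom (wv is) (length is div 2)"
  proof (cases "\<forall>m\<in>set is. even (count_list is m)")
    case True
    have "(\<Sum>m\<in>set is. count_list is m div 2) * 2 = (\<Sum>m\<in>set is. count_list is m)"
      unfolding sum_distrib_right using True by (intro sum.cong) auto
    also have "\<dots> = length is" by (rule sum_count_set) auto
    finally have eq: "(\<Sum>m\<in>set is. count_list is m div 2) * 2 = length is" .
    have "length is div 2 = (\<Sum>m\<in>set is. count_list is m div 2)" unfolding eq[symmetric] by simp
    then show ?thesis by simp
  next
    case False
    then have "wv is = 0" unfolding wv_def cv_def
      by (auto intro: prod_zero)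
    then show ?thesis by simp
  qed
  finally show ?thesis .
qed

lemma wv_odd: "odd (length is) \<Longrightarrow> wv is = 0"
proof -
  assume o: "odd (length is)"
  have "\<exists>m\<in>set is. odd (count_list is m)"
  proof (rule ccontr)
    assume "\<not> ?thesis"
    then have "even (\<Sum>m\<in>set is. count_list is m)" by (auto intro!: dvd_sum)
    then show False using o sum_count_set[of "is" "set is"] by simp
  qed
  then show ?thesis unfolding wv_def cv_def by (auto intro: prod_zero)
qed



lemma prod_low:
  fixes p :: "nat \<Rightarrow> real poly"
  assumes "finite S" "\<And>m j. m \<in> S \<Longrightarrow> 2*j < n m \<Longrightarrow> coeff (p m) j = 0"
  shows "2*j < (\<Sum>m\<in>S. n m) \<Longrightarrow> coeff (\<Prod>m\<in>S. p m) j = 0"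
  using assms
proof (induction S arbitrary: j rule: finite_induct)
  case empty then show ?case by simp
next
  case (insert a S)
  have "coeff (p a * (\<Prod>m\<in>S. p m)) j = (\<Sum>i\<le>j. coeff (p a) i * coeff (\<Prod>m\<in>S. p m) (j-i))"
    by (rule coeff_mult)
  also have "\<dots> = 0"
  proof (rule sum.neutral, rule ballI)
    fix i assume "i \<in> {..j}"
    show "coeff (p a) i * coeff (\<Prod>m\<in>S. p m) (j-i) = 0"
    proof (cases "2*i < n a")
      case True then show ?thesis using insert by simp
    next
      case False
      then have "2*(j-i) < (\<Sum>m\<in>S. n m)" using insert.prems insert.hyps \<open>i \<in> {..j}\<close> by auto
      then show ?thesis using insert by simp
    qed
  qed
  finally show ?case using insert.hyps by simp
qed

lemma prod_mid:
  fixes p q :: "nat \<Rightarrow> real poly"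
  assumes "finite S" "\<And>m j. m \<in> S \<Longrightarrow> 2*j < n m \<Longrightarrow> coeff (p m) j = 0"
    "\<And>m j. m \<in> S \<Longrightarrow> 2*j < n m \<Longrightarrow> coeff (q m) j = 0"
    "\<And>m j. m \<in> S \<Longrightarrow> 2*j = n m \<Longrightarrow> coeff (p m) j = coeff (q m) j"
  shows "2*j = (\<Sum>m\<in>S. n m) \<Longrightarrow> coeff (\<Prod>m\<in>S. p m) j = coeff (\<Prod>m\<in>S. q m) j"
  using assms
proof (induction S arbitrary: j rule: finite_induct)
  case empty then show ?case by simp
next
  case (insert a S)
  have lp: "coeff (\<Prod>m\<in>S. p m) i = 0" if "2*i < (\<Sum>m\<in>S. n m)" for i
    by (rule prod_low[OF insert.hyps(1) _ that]) (use insert.prems in auto)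
  have lq: "coeff (\<Prod>m\<in>S. q m) i = 0" if "2*i < (\<Sum>m\<in>S. n m)" for i
    by (rule prod_low[OF insert.hyps(1) _ that]) (use insert.prems in auto)
  have "coeff (p a * (\<Prod>m\<in>S. p m)) j = (\<Sum>i\<le>j. coeff (p a) i * coeff (\<Prod>m\<in>S. p m) (j-i))"
    by (rule coeff_mult)
  also have "\<dots> = (\<Sum>i\<le>j. coeff (q a) i * coeff (\<Prod>m\<in>S. q m) (j-i))"
  proof (rule sum.cong[OF refl])
    fix i assume i: "i \<in> {..j}"
    show "coeff (p a) i * coeff (\<Prod>m\<in>S. p m) (j-i) = coeff (q a) i * coeff (\<Prod>m\<in>S. q m) (j-i)"
    proof (cases "2*i < n a")
      case True then show ?thesis using insert.prems by simp
    next
      case False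
      show ?thesis
      proof (cases "2*(j-i) < (\<Sum>m\<in>S. n m)")
        case True then show ?thesis using lp lq by simp
      next
        case False2: False
        have "2*i = n a" "2*(j-i) = (\<Sum>m\<in>S. n m)" using False False2 insert.prems(1) insert.hyps i by auto
        then show ?thesis using insert.prems insert.IH[of "j-i"] by simp
      qed
    qed
  qed
  also have "\<dots> = coeff (q a * (\<Prod>m\<in>S. q m)) j" by (rule coeff_mult[symmetric])
  finally show ?case using insert.hyps by simp
qed



lemma C1_low: "2*j < n \<Longrightarrow> coeff (C1 n y) j = 0"
  unfolding C1_closed K_def by simp

lemma sum_cnt: "(\<Sum>m\<in>set is. count_list is m) = length is"
  by (rule sum_count_set) auto

lemma C1_mid': "coeff (C1 (2*j) y) j = coeff (C1 (2*j) 0) j"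
  unfolding C1_closed K_def by simp

lemma C1_mid: "2*j = n \<Longrightarrow> coeff (C1 n y) j = coeff (C1 n 0) j"
  using C1_mid' by blast

lemma Cp_low: "2*j < length is \<Longrightarrow> coeff (Cp is y) j = 0"
  unfolding Cp_def
  by (rule prod_low[where n="count_list is"]) (simp_all add: C1_low sum_cnt)

lemma Cp_mid: "2*j = length is \<Longrightarrow> coeff (Cp is y) j = wv is"
proof -
  assume h: "2*j = length is"
  have "coeff (Cp is y) j = coeff (Cp is (\<lambda>_. 0)) j"
    unfolding Cp_def
    apply (rule prod_mid[where n="count_list is"])
    subgoal by simp
    subgoal by (rule C1_low)
    subgoal by (rule C1_low)
    subgoal by (rule C1_mid)
    subgoal using h sum_cnt[of "is"] by linarith
    done
  also have "\<dots> = wv is" unfolding Cp_zero using h by simp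
  finally show ?thesis .
qed



lemma prod_fact_desc: "(\<Prod>i<l. real (l - i)) = fact l"
proof (induction l)
  case 0 then show ?case by simp
next
  case (Suc l)
  have "(\<Prod>i<Suc l. real (Suc l - i)) = real (Suc l - 0) * (\<Prod>i<l. real (Suc l - Suc i))"
    by (rule prod.lessThan_Suc_shift)
  also have "\<dots> = real (Suc l) * fact l" using Suc by simp
  finally show ?case by simp
qed

lemma Dlist_pow:
  assumes l1: "l \<ge> 1" and isA: "is \<in> AA M (2*l)"
  shows "Dlist is (\<lambda>y. (rr M (\<lambda>_. 0) 0 y)^l) x = fact l * wv is"
proof -
  define F where "F = (\<lambda>j (t::real). (\<Prod>i<j. real (l - i)) * t^(l-j))"
  have F: "\<And>j t. t \<in> UNIV \<Longrightarrow> (F j has_real_derivative F (Suc j) t) (at t)"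
  proof -
    fix j and t :: real
    have "(F j has_real_derivative (\<Prod>i<j. real (l - i)) * (real (l-j) * t^(l-j-1))) (at t)"
    proof -
      have e: "l - j - Suc 0 = l - j - 1" by simp
      show ?thesis unfolding F_def by (intro DERIV_cmult) (use DERIV_pow[of "l-j" t] in simp)
    qed
    moreover have "(\<Prod>i<j. real (l - i)) * (real (l-j) * t^(l-j-1)) = F (Suc j) t"
      unfolding F_def by (simp add: algebra_simps)
    ultimately show "(F j has_real_derivative F (Suc j) t) (at t)" by simp
  qed
  have ff: "\<And>t. t \<in> UNIV \<Longrightarrow> t^l = F 0 t" unfolding F_def by simp
  have sM: "set is \<subseteq> {..<M}" and len: "length is = 2*l" using isA unfolding AA_def by auto
  have "Dlist is (\<lambda>y. (rr M (\<lambda>_. 0) 0 y)^l) x = (\<Sum>j\<le>length is. F j (rr M (\<lambda>_. 0) 0 x) * coeff (Cp is (\<lambda>m. x m + 0)) j)"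
    by (rule wick[where I=UNIV and F=F]) (use F ff sM in auto)
  also have "\<dots> = (\<Sum>j\<le>2*l. if j = l then fact l * wv is else 0)"
  proof (rule sum.cong)
    fix j assume "j \<in> {..2*l}"
    consider "j < l" | "j = l" | "l < j" by linarith
    then show "F j (rr M (\<lambda>_. 0) 0 x) * coeff (Cp is (\<lambda>m. x m + 0)) j = (if j = l then fact l * wv is else 0)"
    proof cases
      case 1 then show ?thesis using Cp_low[of j "is"] len by simp
    next
      case 2
      have "F l t = fact l" for t unfolding F_def prod_fact_desc by simp
      then show ?thesis using 2 Cp_mid[of j "is"] len by simp
    next
      case 3
      have "(\<Prod>i<j. real (l - i)) = 0" by (rule prod_zero) (use 3 in auto)
      then show ?thesis using 3 by (simp add: F_def)
    qed
  qed (simp add: len)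
  also have "\<dots> = fact l * wv is" by simp
  finally show ?thesis .
qed

lemma powr_even: "S \<ge> 0 \<Longrightarrow> l \<ge> 1 \<Longrightarrow> sqrt S powr real (2*l) = S^l"
proof (cases "S = 0")
  case True
  assume "l \<ge> 1" then show ?thesis using True by simp
next
  case False
  assume "S \<ge> 0"
  then have "sqrt S > 0" using False by simp
  then have "sqrt S powr real (2*l) = sqrt S ^ (2*l)" by (rule powr_realpow)
  also have "\<dots> = (sqrt S ^ 2) ^ l" by (simp add: power_mult)
  also have "\<dots> = S^l" using \<open>S \<ge> 0\<close> by simp
  finally show ?thesis .
qed

lemma gamma_val:
  assumes M1: "M \<ge> 1"
  shows "gamma M (real (2*l)) (2*l) = fact l ^ 2 * (\<Sum>is\<in>AA M (2*l). (wv is)^2)"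
proof -
  define v0 where "v0 = fact l ^ 2 * (\<Sum>is\<in>AA M (2*l). (wv is)^2)"
  define hh where "hh = (\<lambda>y. enorm M y powr real (2*l))"
  define P where "P = (\<lambda>x::nat\<Rightarrow>real. (\<forall>j\<ge>M. x j = 0) \<and> (\<exists>j<M. x j \<noteq> 0))"
  have val: "(enorm M x powr (real (2*l) - real (2*l)))\<^sup>2 * gradnorm2 M (2*l) hh x = v0" if Px: "P x" for x
  proof -
    obtain j0 where j0: "j0 < M" "x j0 \<noteq> 0" using Px unfolding P_def by auto
    have "(\<Sum>j<M. (x j)^2) > 0"
      by (rule sum_pos2[of _ j0]) (use j0 in auto)
    then have en: "enorm M x \<noteq> 0" unfolding enorm_def by simp
    have DL: "Dlist is hh x = fact l * wv is" if "is \<in> AA M (2*l)" for "is"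
    proof (cases "l = 0")
      case True
      then have "is = []" using that unfolding AA_def by auto
      then show ?thesis using True en by (simp add: hh_def wv_def)
    next
      case False
      have "hh = (\<lambda>y. (rr M (\<lambda>_. 0) 0 y)^l)"
      proof
        fix y :: "nat \<Rightarrow> real"
        have "sqrt (\<Sum>j<M. (y j)^2) powr real (2*l) = (\<Sum>j<M. (y j)^2)^l"
          by (rule powr_even) (use False in \<open>auto intro: sum_nonneg\<close>)
        then show "hh y = (rr M (\<lambda>_. 0) 0 y)^l" unfolding hh_def enorm_def rr_def by simp
      qed
      then show ?thesis using Dlist_pow[of l "is" M x] that False by simp
    qed
    have "gradnorm2 M (2*l) hh x = (\<Sum>is\<in>AA M (2*l). (fact l * wv is)^2)"
      unfolding gradnorm2_def AA_def[symmetric] by (rule sum.cong) (auto simp: DL)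
    also have "\<dots> = v0" unfolding v0_def by (simp add: power_mult_distrib sum_distrib_left)
    finally show ?thesis using en by simp
  qed
  define x0 :: "nat \<Rightarrow> real" where "x0 = (\<lambda>j. if j = 0 then 1 else 0)"
  have Px0: "P x0" unfolding P_def x0_def using M1 by auto
  show ?thesis
    unfolding gamma_def
  proof (rule the_equality)
    show "\<forall>x. (\<forall>j\<ge>M. x j = 0) \<and> (\<exists>j<M. x j \<noteq> 0) \<longrightarrow> (enorm M x powr (real (2*l) - real (2*l)))\<^sup>2 * gradnorm2 M (2*l) (\<lambda>y. enorm M y powr real (2*l)) x = fact l ^ 2 * (\<Sum>is\<in>AA M (2*l). (wv is)^2)"
      using val unfolding P_def hh_def v0_def by blast
  next
    fix c assume "\<forall>x. (\<forall>j\<ge>M. x j = 0) \<and> (\<exists>j<M. x j \<noteq> 0) \<longrightarrow> (enorm M x powr (real (2*l) - real (2*l)))\<^sup>2 * gradnorm2 M (2*l) (\<lambda>y. enorm M y powr real (2*l)) x = c"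
    then show "c = fact l ^ 2 * (\<Sum>is\<in>AA M (2*l). (wv is)^2)" using val[OF Px0] Px0 unfolding P_def hh_def v0_def by auto
  qed
qed



lemma sum_even_reindex:
  fixes h :: "nat \<Rightarrow> real"
  assumes "\<And>m. odd m \<Longrightarrow> h m = 0"
  shows "(\<Sum>m\<le>k. h m) = (\<Sum>l\<le>k div 2. h (2*l))"
proof -
  have inj: "inj_on (\<lambda>l. 2*l) {..k div 2}" by (auto simp: inj_on_def)
  have "(\<Sum>l\<le>k div 2. h (2*l)) = (\<Sum>m\<in>(\<lambda>l. 2*l) ` {..k div 2}. h m)"
    by (rule sum.reindex[OF inj, unfolded comp_def, symmetric])
  also have "\<dots> = (\<Sum>m\<le>k. h m)"
  proof (rule sum.mono_neutral_left)
    show "(\<lambda>l. 2*l) ` {..k div 2} \<subseteq> {..k}" by auto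
    show "\<forall>i\<in>{..k} - (\<lambda>l. 2*l) ` {..k div 2}. h i = 0"
    proof
      fix i assume i: "i \<in> {..k} - (\<lambda>l. 2*l) ` {..k div 2}"
      have "odd i"
      proof
        assume "even i"
        then obtain l where "i = 2*l" by auto
        then show False using i by auto
      qed
      then show "h i = 0" by (rule assms)
    qed
  qed simp
  finally show ?thesis by simp
qed

lemma coeff_C1_monom: "coeff (C1 r y * monom w h) j = (if j < h then 0 else w * coeff (C1 r y) (j - h))"
  by (simp add: mult.commute[of "C1 r y"] coeff_monom_mult)

lemma part_ii:
  fixes \<epsilon> :: real and a :: "nat \<Rightarrow> real" and f :: "real \<Rightarrow> real"
  assumes "\<epsilon> > 0"
    and sm: "\<forall>t. -\<epsilon> < t \<and> t < \<epsilon> \<longrightarrow> (\<lambda>n. a n * t ^ n) sums f t"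
    and N2: "N \<ge> 2"
  shows "gradnorm2 N k (\<lambda>x. f (rho N x)) (\<lambda>_. 0) =
            fact k * (\<Sum>l=0..k div 2. (fact (k - 2*l) / fact (2*l)) *
               (\<Sum>n=(k+1) div 2..k - l. 2 ^ (2*n - k) * a n * real (n choose (k - n))
                    * real ((k - n) choose l))\<^sup>2 * gamma (N - 1) (real (2*l)) (2*l))"
proof -
  define M where "M = N - 1"
  have NM: "N = Suc M" and M1: "M \<ge> 1" using N2 M_def by auto
  define I where "I = {-\<epsilon><..<\<epsilon>}"
  have summ: "\<And>t. norm t < \<epsilon> \<Longrightarrow> summable (\<lambda>n. a n * t^n)"
  proof -
    fix t :: real assume "norm t < \<epsilon>"
    then have "(\<lambda>n. a n * t ^ n) sums f t" using sm by (auto simp: abs_less_iff)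
    then show "summable (\<lambda>n. a n * t^n)" by (rule sums_summable)
  qed
  have F: "\<And>j t. t \<in> I \<Longrightarrow> (fd a j has_real_derivative fd a (Suc j) t) (at t)"
    using fd_deriv[OF summ] unfolding I_def by (auto simp: abs_less_iff)
  have ff: "\<And>t. t \<in> I \<Longrightarrow> f t = fd a 0 t"
    unfolding I_def fd_def using sm sums_unique by auto
  define s :: "nat \<Rightarrow> real" where "s = (\<lambda>m. if m = M then 1 else 0)"
  have rho_eq: "(\<lambda>x. f (rho N x)) = (\<lambda>x. f (rr N s (-1) x))"
    unfolding rho_def rr_def s_def M_def by simp
  have r0: "rr N s (-1) (\<lambda>_. 0) = 0"
  proof -
    have "(\<Sum>j<N. ((0::real) + s j)^2) = (\<Sum>j<N. if j = M then 1 else 0)"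
      unfolding s_def by (intro sum.cong) auto
    also have "\<dots> = 1" using NM by simp
    finally show ?thesis unfolding rr_def by simp
  qed
  define Vf where "Vf = (\<lambda>m. \<Sum>j\<le>k. fact j * a j * (if m div 2 \<le> j then K (k - m) (j - m div 2) 1 else 0))"
  define \<phi> where "\<phi> = (\<lambda>is'. (wv is' * Vf (length is'))^2)"
  define W where "W = (\<lambda>m. \<Sum>is\<in>AA M m. (wv is)^2)"
  have DL: "(Dlist is (\<lambda>x. f (rho N x)) (\<lambda>_. 0))^2 = \<phi> (filter (\<lambda>m. m \<noteq> M) is)" if isA: "is \<in> AA N k" for "is"
  proof -
    have sN: "set is \<subseteq> {..<N}" and len: "length is = k" using isA unfolding AA_def by auto
    define is' where "is' = filter (\<lambda>m. m \<noteq> M) is"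
    have cnt: "count_list is M = k - length is'" using length_filter_count[of M "is"] len unfolding is'_def by simp
    have "Dlist is (\<lambda>x. f (rho N x)) (\<lambda>_. 0) = (\<Sum>j\<le>length is. fd a j (rr N s (-1) (\<lambda>_. 0)) * coeff (Cp is (\<lambda>m. 0 + s m)) j)"
      unfolding rho_eq by (rule wick[where I=I]) (use F ff r0 sN \<open>\<epsilon> > 0\<close> in \<open>auto simp: I_def\<close>)
    also have "\<dots> = (\<Sum>j\<le>k. fact j * a j * coeff (C1 (k - length is') 1 * monom (wv is') (length is' div 2)) j)"
      unfolding r0 len unfolding s_def Cp_split Cp_zero cnt is'_def[symmetric] by (simp add: fd_zero)
    also have "\<dots> = wv is' * Vf (length is')"
      unfolding Vf_def coeff_C1_monom sum_distrib_left by (intro sum.cong) (auto simp: C1_closed not_less)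
    finally show ?thesis unfolding \<phi>_def is'_def by simp
  qed
  have "gradnorm2 N k (\<lambda>x. f (rho N x)) (\<lambda>_. 0) = (\<Sum>is\<in>AA (Suc M) k. \<phi> (filter (\<lambda>m. m \<noteq> M) is))"
    unfolding gradnorm2_def AA_def[symmetric] NM[symmetric] by (rule sum.cong) (auto simp: DL)
  also have "\<dots> = (\<Sum>m\<le>k. real (k choose m) * (\<Sum>is\<in>AA M m. \<phi> is))" by (rule split_sum)
  also have "\<dots> = (\<Sum>m\<le>k. real (k choose m) * ((Vf m)^2 * W m))"
  proof (rule sum.cong[OF refl])
    fix m
    have "(\<Sum>is\<in>AA M m. \<phi> is) = (\<Sum>is\<in>AA M m. (Vf m)^2 * (wv is)^2)"
      unfolding \<phi>_def by (rule sum.cong) (auto simp: AA_def power_mult_distrib)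
    then show "real (k choose m) * (\<Sum>is\<in>AA M m. \<phi> is) = real (k choose m) * ((Vf m)^2 * W m)"
      unfolding W_def by (simp add: sum_distrib_left)
  qed
  also have "\<dots> = (\<Sum>l\<le>k div 2. real (k choose (2*l)) * ((Vf (2*l))^2 * W (2*l)))"
  proof (rule sum_even_reindex)
    fix m :: nat assume "odd m"
    then have "W m = 0" unfolding W_def by (intro sum.neutral) (auto simp: AA_def wv_odd)
    then show "real (k choose m) * ((Vf m)^2 * W m) = 0" by simp
  qed
  also have "\<dots> = (\<Sum>l\<le>k div 2. fact k * ((fact (k - 2*l) / fact (2*l)) *
               (\<Sum>n=(k+1) div 2..k - l. 2 ^ (2*n - k) * a n * real (n choose (k - n))
                    * real ((k - n) choose l))\<^sup>2 * gamma (N - 1) (real (2*l)) (2*l)))"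
  proof (rule sum.cong[OF refl])
    fix l assume "l \<in> {..k div 2}"
    then have lk: "2*l \<le> k" by auto
    define Sl where "Sl = (\<Sum>n=(k+1) div 2..k - l. 2 ^ (2*n - k) * a n * real (n choose (k - n)) * real ((k - n) choose l))"
    have V: "Vf (2*l) = fact l * fact (k-2*l) * Sl"
    proof -
      have d2: "2*l div 2 = l" by simp
      show ?thesis unfolding Vf_def Sl_def d2 using Vsum[OF lk, of a] by simp
    qed
    have g: "gamma (N - 1) (real (2*l)) (2*l) = fact l ^ 2 * W (2*l)"
      unfolding W_def M_def[symmetric] by (rule gamma_val[OF M1])
    have b: "real (k choose (2*l)) = fact k / (fact (2*l) * fact (k - 2*l))"
      by (rule binomial_fact[OF lk])
    show "real (k choose (2*l)) * ((Vf (2*l))^2 * W (2*l)) = fact k * ((fact (k - 2*l) / fact (2*l)) * Sl\<^sup>2 * gamma (N - 1) (real (2*l)) (2*l))"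
      unfolding V g b by (simp add: field_simps power2_eq_square)
  qed
  also have "\<dots> = fact k * (\<Sum>l=0..k div 2. (fact (k - 2*l) / fact (2*l)) *
               (\<Sum>n=(k+1) div 2..k - l. 2 ^ (2*n - k) * a n * real (n choose (k - n))
                    * real ((k - n) choose l))\<^sup>2 * gamma (N - 1) (real (2*l)) (2*l))"
    by (simp add: sum_distrib_left atLeast0AtMost)
  finally show ?thesis .
qed


theorem proposition3p6:
  fixes \<epsilon> :: real and a :: "nat \<Rightarrow> real" and f :: "real \<Rightarrow> real"
  assumes "\<epsilon> > 0"
    and "\<forall>t. -\<epsilon> < t \<and> t < \<epsilon> \<longrightarrow> (\<lambda>n. a n * t ^ n) sums f t"
  shows "(\<forall>k::nat. (deriv ^^ k) (\<lambda>x. f ((x + 1)\<^sup>2 - 1)) 0 =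
            fact k * (\<Sum>n=(k+1) div 2..k. 2 ^ (2*n - k) * a n * real (n choose (k - n))))
       \<and> (\<forall>N::nat. \<forall>k::nat. N \<ge> 2 \<longrightarrow>
            gradnorm2 N k (\<lambda>x. f (rho N x)) (\<lambda>_. 0) =
            fact k * (\<Sum>l=0..k div 2. (fact (k - 2*l) / fact (2*l)) *
               (\<Sum>n=(k+1) div 2..k - l. 2 ^ (2*n - k) * a n * real (n choose (k - n))
                    * real ((k - n) choose l))\<^sup>2 * gamma (N - 1) (real (2*l)) (2*l)))"
proof (intro conjI allI impI)
  fix k :: nat
  show "(deriv ^^ k) (\<lambda>x. f ((x + 1)\<^sup>2 - 1)) 0 =
            fact k * (\<Sum>n=(k+1) div 2..k. 2 ^ (2*n - k) * a n * real (n choose (k - n)))"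
    by (rule part_i[OF assms])
next
  fix N k :: nat assume "N \<ge> 2"
  then show "gradnorm2 N k (\<lambda>x. f (rho N x)) (\<lambda>_. 0) =
            fact k * (\<Sum>l=0..k div 2. (fact (k - 2*l) / fact (2*l)) *
               (\<Sum>n=(k+1) div 2..k - l. 2 ^ (2*n - k) * a n * real (n choose (k - n))
                    * real ((k - n) choose l))\<^sup>2 * gamma (N - 1) (real (2*l)) (2*l))"
    by (rule part_ii[OF assms])
qed

end
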